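(* Let $p>0$ and let $f$ be twice continuously differentiable on $[0,p]$, such that $f'''$ exists and is bounded in a neighborhood of $s=0$. Then, as $b\to 0^+$, $$\int_0^p f(s)\left(\sqrt{s^2+b^2}-s\right)ds=-\frac{f(0)}{2}\,b^2\ln b+\left(\frac{f(0)}{4}+\frac{f(0)\ln 2}{2}+\frac{f(p)\ln p}{2}-\frac12\int_0^p f'(s)\ln s\,ds\right)b^2+O(b^3).$$ *)

theory Defs
  imports "HOL-Analysis.Analysis" "HOL-Library.Landau_Symbols"
begin

end

theory Submission
  imports Defs "HOL-Real_Asymp.Real_Asymp"
begin

definition Gf :: "real \<Rightarrow> real \<Rightarrow> real" where
  "Gf b s = (s * sqrt (s\<^sup>2 + b\<^sup>2) - s\<^sup>2 + b\<^sup>2 * ln (s + sqrt (s\<^sup>2 + b\<^sup>2))) / 2"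

definition G2f :: "real \<Rightarrow> real \<Rightarrow> real" where
  "G2f b s = ((sqrt (s\<^sup>2 + b\<^sup>2) ^ 3 - s ^ 3) / 3
     + b\<^sup>2 * (s * ln (s + sqrt (s\<^sup>2 + b\<^sup>2)) - sqrt (s\<^sup>2 + b\<^sup>2))) / 2 + b ^ 3 / 3"

lemma r_facts:
  fixes b s :: real assumes "b > 0"
  shows "sqrt (s\<^sup>2 + b\<^sup>2) > \<bar>s\<bar>" "s + sqrt (s\<^sup>2 + b\<^sup>2) > 0"
    "sqrt (s\<^sup>2 + b\<^sup>2) > 0" "sqrt (s\<^sup>2 + b\<^sup>2) ^ 2 = s\<^sup>2 + b\<^sup>2"
proof -
  have "sqrt (s\<^sup>2) < sqrt (s\<^sup>2 + b\<^sup>2)" using assms by (intro real_sqrt_less_mono) simp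
  then show 1: "sqrt (s\<^sup>2 + b\<^sup>2) > \<bar>s\<bar>" by simp
  then show "s + sqrt (s\<^sup>2 + b\<^sup>2) > 0" by linarith
  from 1 show "sqrt (s\<^sup>2 + b\<^sup>2) > 0" by linarith
  show "sqrt (s\<^sup>2 + b\<^sup>2) ^ 2 = s\<^sup>2 + b\<^sup>2" by (simp add: add_nonneg_nonneg)
qed

lemma Gf_aux: fixes r s b :: real assumes "r > 0" "r\<^sup>2 = b\<^sup>2 + s\<^sup>2"
  shows "s * (2 * b\<^sup>2) / r + (s * (s * (s * 2)) + s * (s * (2 * r))) / r = 2 * s\<^sup>2 + s * (2 * r)"
proof -
  have "s * (2 * b\<^sup>2) + (s * (s * (s * 2)) + s * (s * (2 * r))) = (2 * s\<^sup>2 + s * (2 * r)) * r"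
    using assms(2) by algebra
  then show ?thesis using assms(1) by (simp add: field_simps)
qed

lemma Gf_deriv:
  fixes b s :: real assumes b: "b > 0"
  shows "(Gf b has_real_derivative (sqrt (s\<^sup>2 + b\<^sup>2) - s)) (at s)"
proof -
  note r = r_facts[OF b, of s]
  show ?thesis
  unfolding Gf_def
  apply (insert r)
  apply (auto intro!: derivative_eq_intros)
  apply (simp add: field_simps)
  apply (rule Gf_aux)
  using r by (auto simp: add.commute)
qed
lemma G2f_aux: fixes r s b :: real assumes "r > 0" "r\<^sup>2 = b\<^sup>2 + s\<^sup>2"
  shows "s * (s * (b\<^sup>2 * 36)) / r +
        (s * (s * (b\<^sup>2 * 36)) +
         (s * (s * (s\<^sup>2 * 36)) +
          (s * (b\<^sup>2 * (36 * r)) +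
           s * (s\<^sup>2 * (36 * r))))) / r =
        s * (s\<^sup>2 * 36) +
        (s * (s * (36 * r)) +
         (s * (s * (b\<^sup>2 * 36)) + s * (b\<^sup>2 * (36 * r))) / r)"
proof -
  have e: "b\<^sup>2 = r\<^sup>2 - s\<^sup>2" using assms(2) by simp
  show ?thesis using assms(1) unfolding e by (simp add: field_simps power2_eq_square)
qed

lemma G2f_deriv:
  fixes b s :: real assumes b: "b > 0"
  shows "(G2f b has_real_derivative Gf b s) (at s)"
proof -
  note r = r_facts[OF b, of s]
  show ?thesis
  unfolding G2f_def Gf_def
  apply (insert r)
  apply (auto intro!: derivative_eq_intros)
  apply (simp add: field_simps)
  apply (rule G2f_aux)
  using r by (auto simp: add.commute)
qed
lemma ln_ratio_bound:
  fixes s r :: real assumes "s > 0" "r \<ge> s"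
  shows "0 \<le> ln (s + r) - ln 2 - ln s" "ln (s + r) - ln 2 - ln s \<le> (r - s) / (2 * s)"
proof -
  have q: "ln (s + r) - ln 2 - ln s = ln ((s + r) / (2 * s))"
    using assms by (simp add: ln_div ln_mult)
  have q1: "(s + r) / (2 * s) \<ge> 1" using assms by (simp add: field_simps)
  show "0 \<le> ln (s + r) - ln 2 - ln s" unfolding q using q1 by simp
  have "ln ((s + r) / (2 * s)) \<le> (s + r) / (2 * s) - 1" using q1 by (intro ln_le_minus_one) simp
  also have "\<dots> = (r - s) / (2 * s)" using assms by (simp add: field_simps)
  finally show "ln (s + r) - ln 2 - ln s \<le> (r - s) / (2 * s)" unfolding q .
qed

lemma K_bound:
  fixes b s :: real assumes b: "b > 0" and s: "s \<ge> 0"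
  shows "\<bar>G2f b s - b\<^sup>2 * ((1/4 + ln 2 / 2) * s + (s * ln s - s) / 2)\<bar> \<le> 2 * b ^ 3"
proof (cases "s = 0")
  case True
  then show ?thesis using b by (simp add: G2f_def power3_eq_cube power2_eq_square)
next
  case False
  then have s: "s > 0" using s by simp
  define r where "r = sqrt (s\<^sup>2 + b\<^sup>2)"
  have r2: "r\<^sup>2 = s\<^sup>2 + b\<^sup>2" "r > 0" using r_facts[OF b, of s] by (auto simp: r_def)
  have rs: "r \<ge> s" using r_facts[OF b, of s] by (simp add: r_def)
  have rb: "r \<ge> b" unfolding r_def using b by (intro real_le_rsqrt) simp
  have rsb: "r - s \<le> b"
  proof -
    have "r \<le> s + b" unfolding r_def using s b
      by (intro real_le_lsqrt) (auto simp: power2_eq_square algebra_simps)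
    then show ?thesis by simp
  qed
  have srs: "s * (r - s) \<le> b\<^sup>2"
  proof -
    have "s * (r - s) \<le> (r + s) * (r - s)" using s rs by (intro mult_right_mono) auto
    also have "\<dots> = b\<^sup>2" using r2 by (simp add: algebra_simps power2_eq_square)
    finally show ?thesis .
  qed
  define A where "A = (r ^ 3 - s ^ 3) / 6 - b\<^sup>2 * r / 2 + b\<^sup>2 * s / 4"
  define B where "B = b\<^sup>2 * s / 2 * (ln (s + r) - ln 2 - ln s)"
  have dec: "G2f b s - b\<^sup>2 * ((1/4 + ln 2 / 2) * s + (s * ln s - s) / 2) = A + b ^ 3 / 3 + B"
    unfolding G2f_def A_def B_def r_def[symmetric] by (simp add: algebra_simps) (simp add: field_simps)
  have Aid: "A * (6 * (r + s)) = b\<^sup>2 * (s * (s - r) / 2 - 2 * b\<^sup>2)"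
  proof -
    have "A * (6 * (r + s)) = (r ^ 3 - s ^ 3) * (r + s) - 3 * b\<^sup>2 * r * (r + s) + 3/2 * b\<^sup>2 * s * (r + s)"
      unfolding A_def by (simp add: algebra_simps) (simp add: field_simps)
    also have "\<dots> = b\<^sup>2 * (s * (s - r) / 2 - 2 * b\<^sup>2)"
      using r2(1) by algebra
    finally show ?thesis .
  qed
  have Abnd: "\<bar>A\<bar> \<le> b ^ 3 / 2"
  proof -
    have n0: "0 \<le> s * (r - s)" using s rs by simp
    have "s * (s - r) = - (s * (r - s))" by (simp add: algebra_simps)
    then have "\<bar>s * (s - r) / 2 - 2 * b\<^sup>2\<bar> \<le> 5/2 * b\<^sup>2" 
      unfolding abs_le_iff using srs n0 by linarith
    then have "\<bar>A\<bar> * (6 * (r + s)) \<le> b\<^sup>2 * (5/2 * b\<^sup>2)"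
    proof -
      have "\<bar>A\<bar> * (6 * (r + s)) = \<bar>A * (6 * (r + s))\<bar>" using r2(2) s by (simp add: abs_mult)
      also have "\<dots> = b\<^sup>2 * \<bar>s * (s - r) / 2 - 2 * b\<^sup>2\<bar>" unfolding Aid by (simp add: abs_mult)
      also have "\<dots> \<le> b\<^sup>2 * (5/2 * b\<^sup>2)" using \<open>\<bar>s * (s - r) / 2 - 2 * b\<^sup>2\<bar> \<le> 5/2 * b\<^sup>2\<close>
        by (intro mult_left_mono) auto
      finally show ?thesis .
    qed
    moreover have "\<bar>A\<bar> * (6 * b) \<le> \<bar>A\<bar> * (6 * (r + s))" using rb s by (intro mult_left_mono) auto
    ultimately have "\<bar>A\<bar> * (6 * b) \<le> b\<^sup>2 * (5/2 * b\<^sup>2)" by linarith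
    then have "\<bar>A\<bar> \<le> b\<^sup>2 * (5/2 * b\<^sup>2) / (6 * b)" using b by (simp add: field_simps)
    also have "\<dots> = 5/12 * b ^ 3" using b by (simp add: field_simps power2_eq_square power3_eq_cube)
    finally show ?thesis using b by simp
  qed
  have Bbnd: "0 \<le> B" "B \<le> b ^ 3 / 4"
  proof -
    note L = ln_ratio_bound[OF s rs]
    show "0 \<le> B" unfolding B_def using L s by simp
    have "B \<le> b\<^sup>2 * s / 2 * ((r - s) / (2 * s))" unfolding B_def using L s by (intro mult_left_mono) auto
    also have "\<dots> = b\<^sup>2 * (r - s) / 4" using s by (simp add: field_simps)
    also have "\<dots> \<le> b\<^sup>2 * b / 4" using rsb by (intro divide_right_mono mult_left_mono) auto
    finally show "B \<le> b ^ 3 / 4" by (simp add: power2_eq_square power3_eq_cube)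
  qed
  have b3: "b ^ 3 > 0" using b by simp
  from Abnd have "A \<le> b ^ 3 / 2" "- A \<le> b ^ 3 / 2" by (simp_all add: abs_le_iff)
  then show ?thesis unfolding dec abs_le_iff using Bbnd b3 by linarith
qed

lemma H_bound:
  fixes b p :: real assumes b: "b > 0" and p: "p > 0"
  shows "\<bar>Gf b p - b\<^sup>2 * (1/4 + ln 2 / 2 + ln p / 2)\<bar> \<le> b ^ 3 / p"
proof -
  define r where "r = sqrt (p\<^sup>2 + b\<^sup>2)"
  have r2: "r\<^sup>2 = p\<^sup>2 + b\<^sup>2" "r > 0" using r_facts[OF b, of p] by (auto simp: r_def)
  have rs: "r \<ge> p" using r_facts[OF b, of p] by (simp add: r_def)
  have rsb: "r - p \<le> b"
  proof -
    have "r \<le> p + b" unfolding r_def using p b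
      by (intro real_le_lsqrt) (auto simp: power2_eq_square algebra_simps)
    then show ?thesis by simp
  qed
  define D where "D = (p * r - p\<^sup>2) / 2 - b\<^sup>2 / 4"
  define B where "B = b\<^sup>2 / 2 * (ln (p + r) - ln 2 - ln p)"
  have dec: "Gf b p - b\<^sup>2 * (1/4 + ln 2 / 2 + ln p / 2) = D + B"
    unfolding Gf_def D_def B_def r_def[symmetric] by (simp add: algebra_simps) (simp add: field_simps)
  have Did: "D * (4 * (r + p)) = b\<^sup>2 * (p - r)"
  proof -
    have "D * (4 * (r + p)) = 2 * (p * r - p\<^sup>2) * (r + p) - b\<^sup>2 * (r + p)"
      unfolding D_def by (simp add: algebra_simps) (simp add: field_simps)
    also have "\<dots> = b\<^sup>2 * (p - r)" using r2(1) by algebra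
    finally show ?thesis .
  qed
  have Dbnd: "\<bar>D\<bar> \<le> b ^ 3 / (4 * p)"
  proof -
    have "\<bar>D\<bar> * (4 * (r + p)) = b\<^sup>2 * (r - p)" using Did rs r2 p
      by (metis abs_minus_commute abs_mult abs_of_nonneg abs_of_pos add_pos_pos diff_ge_0_iff_ge
          mult_pos_pos zero_le_power2 zero_less_numeral)
    also have "\<dots> \<le> b\<^sup>2 * b" using rsb by (intro mult_left_mono) auto
    finally have "\<bar>D\<bar> * (4 * (r + p)) \<le> b ^ 3" by (simp add: power2_eq_square power3_eq_cube)
    moreover have "\<bar>D\<bar> * (4 * p) \<le> \<bar>D\<bar> * (4 * (r + p))" using r2 by (intro mult_left_mono) auto
    ultimately have "\<bar>D\<bar> * (4 * p) \<le> b ^ 3" by linarith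
    then show ?thesis using p by (simp add: field_simps)
  qed
  have Bbnd: "0 \<le> B" "B \<le> b ^ 3 / (4 * p)"
  proof -
    note L = ln_ratio_bound[OF p rs]
    show "0 \<le> B" unfolding B_def using L by simp
    have "B \<le> b\<^sup>2 / 2 * ((r - p) / (2 * p))" unfolding B_def using L by (intro mult_left_mono) auto
    also have "\<dots> \<le> b\<^sup>2 / 2 * (b / (2 * p))" using rsb p by (intro mult_left_mono divide_right_mono) auto
    finally show "B \<le> b ^ 3 / (4 * p)" by (simp add: power2_eq_square power3_eq_cube field_simps)
  qed
  have "b ^ 3 / (4 * p) + b ^ 3 / (4 * p) \<le> b ^ 3 / p" using p b by (simp add: field_simps)
  moreover from Dbnd have "D \<le> b ^ 3 / (4 * p)" "- D \<le> b ^ 3 / (4 * p)" by (simp_all add: abs_le_iff)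
  ultimately show ?thesis unfolding dec abs_le_iff using Bbnd by linarith
qed
theorem lemma2:
  fixes f f' f'' f''' :: "real \<Rightarrow> real" and p :: real
  assumes p_pos: "p > 0"
    and d1: "\<forall>x\<in>{0..p}. (f has_real_derivative f' x) (at x within {0..p})"
    and d2: "\<forall>x\<in>{0..p}. (f' has_real_derivative f'' x) (at x within {0..p})"
    and c2: "continuous_on {0..p} f''"
    and d3: "\<exists>\<delta>>0. \<exists>M. \<forall>x\<in>{0..p}. x < \<delta> \<longrightarrow>
               (f'' has_real_derivative f''' x) (at x within {0..p}) \<and> \<bar>f''' x\<bar> \<le> M"
  shows "(\<lambda>b. integral {0..p} (\<lambda>s. f s * (sqrt (s\<^sup>2 + b\<^sup>2) - s))
            - ( - f 0 / 2 * b\<^sup>2 * ln b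
                + (f 0 / 4 + f 0 * ln 2 / 2 + f p * ln p / 2
                   - 1/2 * integral {0..p} (\<lambda>s. f' s * ln s)) * b\<^sup>2))
         \<in> O[at_right (0::real)](\<lambda>b. b ^ 3)"
proof -
  have p0: "0 \<le> p" using p_pos by simp
  have cf: "continuous_on {0..p} f"
    using d1 by (auto simp: continuous_on_eq_continuous_within intro: DERIV_continuous)
  have cf': "continuous_on {0..p} f'"
    using d2 by (auto simp: continuous_on_eq_continuous_within intro: DERIV_continuous)
  obtain M2 where M2: "\<And>x. x \<in> {0..p} \<Longrightarrow> \<bar>f'' x\<bar> \<le> M2"
    using compact_imp_bounded[OF compact_continuous_image[OF c2 compact_Icc]]
    unfolding bounded_iff by (metis imageI real_norm_def)
  have M2nn: "M2 \<ge> 0" using M2[of 0] p0 by auto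
  define c :: real where "c = 1/4 + ln 2 / 2"
  define lg where "lg = (\<lambda>s::real. s * ln s - s)"
  have clg: "continuous_on {0..p} lg"
    unfolding continuous_on_eq_continuous_within
  proof
    fix x assume x: "x \<in> {0..p}"
    show "continuous (at x within {0..p}) lg"
    proof (cases "x = 0")
      case True
      have "(lg \<longlongrightarrow> 0) (at_right 0)" unfolding lg_def by real_asymp
      then show ?thesis using True p_pos
        by (simp add: continuous_within at_within_Icc_at_right lg_def)
    next
      case False
      then have "x > 0" using x by simp
      then have "isCont lg x" unfolding lg_def by (auto intro!: continuous_intros)
      then show ?thesis using continuous_at_imp_continuous_within by blast
    qed
  qed
  define J1 where "J1 = integral {0..p} (\<lambda>s. f'' s * lg s)"
  have h1: "((\<lambda>s. f'' s * lg s) has_integral J1) {0..p}"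
    unfolding J1_def using c2 clg
    by (intro integrable_integral integrable_continuous_interval continuous_on_mult)
  have IA: "integral {0..p} (\<lambda>s. f' s * ln s) = f' p * (p * ln p - p) - J1"
  proof -
    have "((\<lambda>s. f'' s * lg s + f' s * ln s) has_integral (f' p * lg p - f' 0 * lg 0)) {0..p}"
    proof (rule fundamental_theorem_of_calculus_interior_strong[of "{}"])
      fix x assume x: "x \<in> {0<..<p} - {}"
      then have xi: "x \<in> interior {0..p}" by simp
      have "(f' has_real_derivative f'' x) (at x)"
        using d2[rule_format, of x] x at_within_interior[OF xi] by simp
      moreover have "(lg has_real_derivative ln x) (at x)"
        unfolding lg_def using x by (auto intro!: derivative_eq_intros)
      ultimately have "((\<lambda>s. f' s * lg s) has_real_derivative f'' x * lg x + f' x * ln x) (at x)"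
        by (auto intro!: derivative_eq_intros)
      then show "((\<lambda>s. f' s * lg s) has_vector_derivative f'' x * lg x + f' x * ln x) (at x)"
        by (simp add: has_real_derivative_iff_has_vector_derivative)
    next
      show "continuous_on {0..p} (\<lambda>s. f' s * lg s)" using cf' clg by (intro continuous_on_mult)
    qed (use p0 in auto)
    then have "((\<lambda>s. f'' s * lg s + f' s * ln s - f'' s * lg s) has_integral
               (f' p * lg p - f' 0 * lg 0) - J1) {0..p}"
      using h1 by (rule has_integral_diff)
    then have "((\<lambda>s. f' s * ln s) has_integral f' p * (p * ln p - p) - J1) {0..p}"
      by (simp add: lg_def)
    then show ?thesis by (rule integral_unique)
  qed
  define J3 where "J3 = integral {0..p} (\<lambda>s. f'' s * s)"
  have h3: "((\<lambda>s. f'' s * s) has_integral J3) {0..p}"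
    unfolding J3_def using c2
    by (intro integrable_integral integrable_continuous_interval continuous_on_mult continuous_intros)
  have f0: "f 0 = f p - p * f' p + J3"
  proof -
    have "((\<lambda>s. - (f'' s * s)) has_integral ((f p - p * f' p) - (f 0 - 0 * f' 0))) {0..p}"
    proof (rule fundamental_theorem_of_calculus[OF p0])
      fix x assume x: "x \<in> {0..p}"
      have "((\<lambda>s. f s - s * f' s) has_real_derivative f' x - (1 * f' x + x * f'' x)) (at x within {0..p})"
        using d1 d2 x by (auto intro!: derivative_eq_intros)
      then show "((\<lambda>s. f s - s * f' s) has_vector_derivative - (f'' x * x)) (at x within {0..p})"
        by (simp add: has_real_derivative_iff_has_vector_derivative algebra_simps)
    qed
    moreover have "((\<lambda>s. - (f'' s * s)) has_integral - J3) {0..p}" using h3 by (rule has_integral_neg)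
    ultimately have "- J3 = (f p - p * f' p) - (f 0 - 0 * f' 0)" by (metis has_integral_unique)
    then show ?thesis by simp
  qed
  define C where "C = \<bar>f p\<bar> / p + 2 * \<bar>f' p\<bar> + 2 * M2 * p"
  have main: "\<bar>integral {0..p} (\<lambda>s. f s * (sqrt (s\<^sup>2 + b\<^sup>2) - s))
            - ( - f 0 / 2 * b\<^sup>2 * ln b
                + (f 0 / 4 + f 0 * ln 2 / 2 + f p * ln p / 2
                   - 1/2 * integral {0..p} (\<lambda>s. f' s * ln s)) * b\<^sup>2)\<bar> \<le> C * b ^ 3"
    if b: "b > 0" for b
  proof -
    have cG2: "continuous_on {0..p} (G2f b)"
      by (intro continuous_at_imp_continuous_on ballI DERIV_isCont[OF G2f_deriv[OF b]])
    define J2 where "J2 = integral {0..p} (\<lambda>s. f'' s * G2f b s)"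
    have h2: "((\<lambda>s. f'' s * G2f b s) has_integral J2) {0..p}"
      unfolding J2_def using c2 cG2
      by (intro integrable_integral integrable_continuous_interval continuous_on_mult)
    have IB: "((\<lambda>s. f s * (sqrt (s\<^sup>2 + b\<^sup>2) - s) - f'' s * G2f b s) has_integral
       ((f p * Gf b p - f' p * G2f b p) - (f 0 * Gf b 0 - f' 0 * G2f b 0))) {0..p}"
    proof (rule fundamental_theorem_of_calculus[OF p0])
      fix x assume x: "x \<in> {0..p}"
      have "((\<lambda>s. f s * Gf b s - f' s * G2f b s) has_real_derivative
          (f' x * Gf b x + f x * (sqrt (x\<^sup>2 + b\<^sup>2) - x)) - (f'' x * G2f b x + f' x * Gf b x))
          (at x within {0..p})"
        using d1 d2 x has_field_derivative_at_within[OF Gf_deriv[OF b]]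
          has_field_derivative_at_within[OF G2f_deriv[OF b]]
        by (auto intro!: derivative_eq_intros)
      then show "((\<lambda>s. f s * Gf b s - f' s * G2f b s) has_vector_derivative
          f x * (sqrt (x\<^sup>2 + b\<^sup>2) - x) - f'' x * G2f b x) (at x within {0..p})"
        by (simp add: has_real_derivative_iff_has_vector_derivative algebra_simps)
    qed
    have G0: "Gf b 0 = b\<^sup>2 * ln b / 2" using b by (simp add: Gf_def)
    have G20: "G2f b 0 = 0" using b by (simp add: G2f_def power3_eq_cube power2_eq_square)
    have Ifg: "integral {0..p} (\<lambda>s. f s * (sqrt (s\<^sup>2 + b\<^sup>2) - s))
        = f p * Gf b p - f' p * G2f b p - f 0 * (b\<^sup>2 * ln b / 2) + J2"
    proof -
      have "((\<lambda>s. f s * (sqrt (s\<^sup>2 + b\<^sup>2) - s) - f'' s * G2f b s + f'' s * G2f b s) has_integral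
       ((f p * Gf b p - f' p * G2f b p) - (f 0 * Gf b 0 - f' 0 * G2f b 0)) + J2) {0..p}"
        using IB h2 by (rule has_integral_add)
      then show ?thesis using G0 G20 by (simp add: integral_unique)
    qed
    define K where "K = (\<lambda>s. G2f b s - b\<^sup>2 * (c * s + lg s / 2))"
    have hK: "((\<lambda>s. f'' s * K s) has_integral J2 - b\<^sup>2 * c * J3 - b\<^sup>2 / 2 * J1) {0..p}"
    proof -
      have "((\<lambda>s. f'' s * G2f b s - b\<^sup>2 * c * (f'' s * s) - b\<^sup>2 / 2 * (f'' s * lg s))
          has_integral J2 - b\<^sup>2 * c * J3 - b\<^sup>2 / 2 * J1) {0..p}"
        by (intro has_integral_diff has_integral_mult_right h1 h2 h3)
      moreover have "(\<lambda>s. f'' s * G2f b s - b\<^sup>2 * c * (f'' s * s) - b\<^sup>2 / 2 * (f'' s * lg s))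
          = (\<lambda>s. f'' s * K s)" by (simp add: fun_eq_iff K_def algebra_simps)
      ultimately show ?thesis by simp
    qed
    have Kb: "\<bar>K s\<bar> \<le> 2 * b ^ 3" if "s \<in> {0..p}" for s
      using K_bound[OF b, of s] that unfolding K_def c_def lg_def by simp
    have JK: "\<bar>J2 - b\<^sup>2 * c * J3 - b\<^sup>2 / 2 * J1\<bar> \<le> (M2 * (2 * b ^ 3)) * p"
    proof -
      have "norm (J2 - b\<^sup>2 * c * J3 - b\<^sup>2 / 2 * J1) \<le> (M2 * (2 * b ^ 3)) * Henstock_Kurzweil_Integration.content (cbox 0 p)"
      proof (rule has_integral_bound)
        show "0 \<le> M2 * (2 * b ^ 3)" using M2nn b by simp
        show "((\<lambda>s. f'' s * K s) has_integral J2 - b\<^sup>2 * c * J3 - b\<^sup>2 / 2 * J1) (cbox 0 p)"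
          using hK by simp
        fix x assume "x \<in> cbox 0 p"
        then have x: "x \<in> {0..p}" by simp
        show "norm (f'' x * K x) \<le> M2 * (2 * b ^ 3)"
          unfolding real_norm_def abs_mult using M2[OF x] Kb[OF x]
          by (intro mult_mono) auto
      qed
      then show ?thesis using p0 by (simp add: content_real)
    qed
    have Hb: "\<bar>Gf b p - b\<^sup>2 * (c + ln p / 2)\<bar> \<le> b ^ 3 / p"
      using H_bound[OF b p_pos] unfolding c_def by simp
    have Kp: "\<bar>K p\<bar> \<le> 2 * b ^ 3" using Kb[of p] p0 by simp
    have eq: "integral {0..p} (\<lambda>s. f s * (sqrt (s\<^sup>2 + b\<^sup>2) - s))
            - ( - f 0 / 2 * b\<^sup>2 * ln b
                + (f 0 / 4 + f 0 * ln 2 / 2 + f p * ln p / 2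
                   - 1/2 * integral {0..p} (\<lambda>s. f' s * ln s)) * b\<^sup>2)
         = f p * (Gf b p - b\<^sup>2 * (c + ln p / 2)) - f' p * K p + (J2 - b\<^sup>2 * c * J3 - b\<^sup>2 / 2 * J1)"
      unfolding Ifg IA K_def lg_def f0
      by (simp add: c_def algebra_simps) (simp add: field_simps)
    have "\<bar>f p * (Gf b p - b\<^sup>2 * (c + ln p / 2))\<bar> \<le> \<bar>f p\<bar> * (b ^ 3 / p)"
      unfolding abs_mult using Hb by (intro mult_left_mono) auto
    moreover have "\<bar>f' p * K p\<bar> \<le> \<bar>f' p\<bar> * (2 * b ^ 3)"
      unfolding abs_mult using Kp by (intro mult_left_mono) auto
    moreover have "C * b ^ 3 = \<bar>f p\<bar> * (b ^ 3 / p) + \<bar>f' p\<bar> * (2 * b ^ 3) + (M2 * (2 * b ^ 3)) * p"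
      unfolding C_def using p_pos by (simp add: field_simps)
    ultimately show ?thesis unfolding eq using JK by (simp add: abs_le_iff)
  qed
  show ?thesis
  proof (rule bigoI[where c = C])
    show "\<forall>\<^sub>F b in at_right 0. norm (integral {0..p} (\<lambda>s. f s * (sqrt (s\<^sup>2 + b\<^sup>2) - s))
            - ( - f 0 / 2 * b\<^sup>2 * ln b
                + (f 0 / 4 + f 0 * ln 2 / 2 + f p * ln p / 2
                   - 1/2 * integral {0..p} (\<lambda>s. f' s * ln s)) * b\<^sup>2)) \<le> C * norm (b ^ 3)"
      using eventually_at_right_less[of "0::real"]
    proof (rule eventually_mono)
      fix b :: real assume "0 < b"
      then show "norm (integral {0..p} (\<lambda>s. f s * (sqrt (s\<^sup>2 + b\<^sup>2) - s))
            - ( - f 0 / 2 * b\<^sup>2 * ln b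
                + (f 0 / 4 + f 0 * ln 2 / 2 + f p * ln p / 2
                   - 1/2 * integral {0..p} (\<lambda>s. f' s * ln s)) * b\<^sup>2)) \<le> C * norm (b ^ 3)"
        using main[of b] by simp
    qed
  qed
qed

end
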